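(* Let $d\ge1$, $\sigma>0$, $\eta>0$, and for $\nu>1$ set $\tilde\gamma=\frac{\eta\sqrt{\nu-1}}{\sigma}$. Then for every fixed integer $k\ge0$, as $\nu\to+\infty$, \[ \alpha_k^{(\nu,\tilde\gamma)}\sim\frac{\Gamma(k+\frac d2)}{k!\,\Gamma(\frac d2)}\left(\frac{\eta^2}{\sigma^2}\right)^k\left(1+\frac{\eta^2}{\sigma^2}\right)^{-k-\frac d2} \] (the ratio of the two sides tends to $1$). As a consequence, if $\mathbf{X}$ is centered Gaussian in $\mathbb{R}^d$ with covariance $\sigma^2I_d$ and $\mathbf{T}$ is independent with Student density $f_\nu(\mathbf{t})=\frac{\Gamma(\nu+\frac d2)}{\Gamma(\nu)\pi^{d/2}}(1+\Vert\mathbf{t}\Vert^2)^{-\nu-\frac d2}$, then the density $f_{\mathbf{Z}}=\sum_{k\ge0}\alpha_k^{(\nu,\tilde\gamma)}g_{k,\sigma}$ of $\mathbf{Z}=\mathbf{X}+\eta\sqrt{2(\nu-1)}\,\mathbf{T}$ converges, as $\nu\to+\infty$, to the Gaussian density with covariance $(\sigma^2+\eta^2)I_d$, namely $(2\pi(\sigma^2+\eta^2))^{-d/2}\exp\left(-\frac{\Vert\mathbf{z}\Vert^2}{2(\sigma^2+\eta^2)}\right)$.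
   Context: $\alpha_k^{(\nu,\gamma)}=\frac{\Gamma(k+\frac d2)}{k!\,\Gamma(\frac d2)\Gamma(\nu)}\gamma^{2k}\int_0^{\infty}e^{-a}a^{\nu+\frac d2-1}(a+\gamma^2)^{-k-\frac d2}\,da$ for $\gamma>0$, $\nu>0$. For $k\in\mathbb{N}$, $g_{k,\sigma}(\mathbf{z})=\frac{\Gamma(\frac d2)}{\Gamma(k+\frac d2)(\sigma\sqrt{2\pi})^d}\left(\frac{\Vert\mathbf{z}\Vert^2}{2\sigma^2}\right)^k\exp\left(-\frac{\Vert\mathbf{z}\Vert^2}{2\sigma^2}\right)$, $\mathbf{z}\in\mathbb{R}^d$. The random vector $\eta\sqrt{2(\nu-1)}\mathbf{T}$ has covariance $\eta^2 I_d$. *)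

theory Defs
  imports "HOL-Analysis.Analysis"
begin

definition alpha_coef :: "real \<Rightarrow> real \<Rightarrow> real \<Rightarrow> nat \<Rightarrow> real" where
  "alpha_coef d \<nu> \<gamma> k =
     Gamma (real k + d / 2) / (fact k * Gamma (d / 2) * Gamma \<nu>) * \<gamma> ^ (2 * k) *
     (LBINT a:{0<..}. exp (- a) * a powr (\<nu> + d / 2 - 1) * (a + \<gamma>\<^sup>2) powr (- real k - d / 2))"

definition g_fun :: "nat \<Rightarrow> real \<Rightarrow> 'a::euclidean_space \<Rightarrow> real" where
  "g_fun k \<sigma> z =
     Gamma (real DIM('a) / 2) / (Gamma (real k + real DIM('a) / 2) * (\<sigma> * sqrt (2 * pi)) ^ DIM('a)) *
     ((norm z)\<^sup>2 / (2 * \<sigma>\<^sup>2)) ^ k * exp (- (norm z)\<^sup>2 / (2 * \<sigma>\<^sup>2))"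

end

theory Submission
  imports Defs
begin

lemma pow_diff_le:
  fixes x y :: real
  assumes "0 \<le> x" "x \<le> 1" "0 \<le> y" "y \<le> 1"
  shows "\<bar>x ^ m - y ^ m\<bar> \<le> real m * \<bar>x - y\<bar>"
proof (induction m)
  case 0 then show ?case by simp
next
  case (Suc m)
  have "x ^ Suc m - y ^ Suc m = x * (x^m - y^m) + y^m * (x - y)"
    by (simp add: algebra_simps)
  hence "\<bar>x ^ Suc m - y ^ Suc m\<bar> \<le> \<bar>x\<bar> * \<bar>x^m - y^m\<bar> + \<bar>y^m\<bar> * \<bar>x - y\<bar>"
    by (metis abs_mult abs_triangle_ineq)
  also have "\<dots> \<le> 1 * \<bar>x^m - y^m\<bar> + 1 * \<bar>x - y\<bar>"
    using assms by (intro add_mono mult_right_mono) (auto simp: power_le_one)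
  also have "\<dots> \<le> real (Suc m) * \<bar>x - y\<bar>" using Suc by (simp add: algebra_simps)
  finally show ?case .
qed

lemma powr_half_nat:
  fixes t :: real assumes "t > 0"
  shows "t powr (real n / 2) = sqrt t ^ n"
  using assms by (simp add: powr_half_sqrt[symmetric] powr_realpow[symmetric] powr_powr)

lemma sqrt_diff_le:
  fixes t L :: real assumes "t \<ge> 0" "L > 0"
  shows "\<bar>sqrt t - sqrt L\<bar> \<le> \<bar>t - L\<bar> / sqrt L"
proof -
  have sp: "sqrt t + sqrt L > 0" using assms by (simp add: add_nonneg_pos)
  have "t - L = (sqrt t - sqrt L) * (sqrt t + sqrt L)"
    using assms by (simp add: algebra_simps)
  hence "\<bar>t - L\<bar> = \<bar>sqrt t - sqrt L\<bar> * (sqrt t + sqrt L)" using sp by (simp add: abs_mult)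
  moreover have "\<bar>sqrt t - sqrt L\<bar> * sqrt L \<le> \<bar>sqrt t - sqrt L\<bar> * (sqrt t + sqrt L)"
    using assms by (intro mult_left_mono) auto
  ultimately show ?thesis using assms by (simp add: pos_le_divide_eq)
qed

lemma powr_diff_le:
  fixes t L :: real assumes "0 < t" "t \<le> 1" "0 < L" "L \<le> 1"
  shows "\<bar>t powr (real n / 2) - L powr (real n / 2)\<bar> \<le> real n / sqrt L * \<bar>t - L\<bar>"
proof -
  have "\<bar>t powr (real n / 2) - L powr (real n / 2)\<bar> = \<bar>sqrt t ^ n - sqrt L ^ n\<bar>"
    using assms by (simp add: powr_half_nat)
  also have "\<dots> \<le> real n * \<bar>sqrt t - sqrt L\<bar>"
    using assms by (intro pow_diff_le) auto
  also have "\<dots> \<le> real n * (\<bar>t - L\<bar> / sqrt L)"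
    using assms by (intro mult_left_mono sqrt_diff_le) auto
  finally show ?thesis by simp
qed

lemma H_lip:
  fixes t L :: real assumes "0 < t" "t \<le> 1" "0 < L" "L \<le> 1"
  shows "\<bar>t powr (real n / 2) * (1 - t) ^ k - L powr (real n / 2) * (1 - L) ^ k\<bar>
     \<le> (real n / sqrt L + real k) * \<bar>t - L\<bar>"
proof -
  let ?x1 = "t powr (real n / 2)" and ?x2 = "L powr (real n / 2)"
  let ?y1 = "(1 - t) ^ k" and ?y2 = "(1 - L) ^ k"
  have "?x1 * ?y1 - ?x2 * ?y2 = (?x1 - ?x2) * ?y1 + ?x2 * (?y1 - ?y2)" by (simp add: algebra_simps)
  hence "\<bar>?x1 * ?y1 - ?x2 * ?y2\<bar> \<le> \<bar>?x1 - ?x2\<bar> * \<bar>?y1\<bar> + \<bar>?x2\<bar> * \<bar>?y1 - ?y2\<bar>"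
    by (metis abs_mult abs_triangle_ineq)
  also have "\<dots> \<le> \<bar>?x1 - ?x2\<bar> * 1 + 1 * \<bar>?y1 - ?y2\<bar>"
    using assms by (intro add_mono mult_left_mono mult_right_mono)
       (auto simp: power_le_one powr_le1 abs_le_iff)
  also have "\<dots> \<le> real n / sqrt L * \<bar>t - L\<bar> + real k * \<bar>(1 - t) - (1 - L)\<bar>"
  proof (intro add_mono)
    show "\<bar>?x1 - ?x2\<bar> * 1 \<le> real n / sqrt L * \<bar>t - L\<bar>" using powr_diff_le[OF assms] by simp
    show "1 * \<bar>?y1 - ?y2\<bar> \<le> real k * \<bar>(1 - t) - (1 - L)\<bar>" using assms pow_diff_le[of "1-t" "1-L" k] by simp
  qed
  finally show ?thesis by (simp add: algebra_simps abs_minus_commute)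
qed

lemma t_close:
  fixes a g \<nu> :: real assumes "a > 0" "g > 0" "\<nu> > 0"
  shows "\<bar>a / (a + g) - \<nu> / (\<nu> + g)\<bar> \<le> \<bar>a / \<nu> - 1\<bar>"
proof -
  have e: "a / (a + g) - \<nu> / (\<nu> + g) = g * (a - \<nu>) / ((a + g) * (\<nu> + g))"
    using assms by (simp add: field_simps)
  have "\<bar>g * (a - \<nu>) / ((a + g) * (\<nu> + g))\<bar> = (g / (a + g)) * (\<bar>a - \<nu>\<bar> / (\<nu> + g))"
    using assms by (simp add: abs_mult)
  also have "\<dots> \<le> 1 * (\<bar>a - \<nu>\<bar> / \<nu>)"
    using assms by (intro mult_mono divide_left_mono) auto
  also have "\<dots> = \<bar>a / \<nu> - 1\<bar>"
  proof -
    have "(a - \<nu>) / \<nu> = a / \<nu> - 1" using assms by (simp add: diff_divide_distrib)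
    thus ?thesis using abs_div_pos[of \<nu> "a - \<nu>"] assms by simp
  qed
  finally show ?thesis using e by simp
qed

lemma abs_le_quad:
  fixes y s :: real assumes "s > 0"
  shows "\<bar>y\<bar> \<le> s + y^2 / s"
proof (cases "\<bar>y\<bar> \<le> s")
  case True then show ?thesis using assms by (simp add: add_increasing2)
next
  case False
  hence "\<bar>y\<bar> * s \<le> \<bar>y\<bar> * \<bar>y\<bar>" by (intro mult_left_mono) auto
  hence "\<bar>y\<bar> \<le> y^2 / s" using assms by (simp add: pos_le_divide_eq power2_eq_square)
  then show ?thesis using assms by simp
qed

lemma ring_aux: "(G::real) * (E * (P * Q) * (inverse R * inverse S)) = E * P * (Q / S * (G / R))"
  by (simp add: divide_inverse mult_ac)

lemma pw:
  fixes a g \<nu> :: real assumes "a > 0" "g > 0"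
  shows "g ^ k * (exp (-a) * a powr (\<nu> + real n / 2 - 1) * (a + g) powr (- real k - real n / 2))
       = exp (-a) * a powr (\<nu> - 1) * ((a / (a + g)) powr (real n / 2) * (1 - a / (a + g)) ^ k)"
proof -
  have 1: "1 - a / (a + g) = g / (a + g)" using assms by (simp add: field_simps)
  have 2: "a powr (\<nu> + real n / 2 - 1) = a powr (\<nu> - 1) * a powr (real n / 2)"
    by (simp add: powr_add[symmetric] algebra_simps)
  have 3: "(a + g) powr (- real k - real n / 2) = inverse ((a + g) ^ k) * inverse ((a + g) powr (real n / 2))"
  proof -
    have h3a: "- real k - real n / 2 = (- real k) + (- (real n / 2))" by simp
    have "(a + g) powr (- real k - real n / 2) = (a + g) powr (- real k) * (a + g) powr (- (real n / 2))"
      unfolding h3a by (rule powr_add)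
    also have "\<dots> = inverse ((a + g) powr real k) * inverse ((a + g) powr (real n / 2))"
      by (simp only: powr_minus)
    also have "(a + g) powr real k = (a + g) ^ k" using assms by (intro powr_realpow) auto
    finally show ?thesis .
  qed
  have 4: "(a / (a + g)) powr (real n / 2) = a powr (real n / 2) / (a + g) powr (real n / 2)"
    by (intro powr_divide; use assms in auto)
  have 5: "(g / (a + g)) ^ k = g ^ k / (a + g) ^ k" by (rule power_divide)
  show ?thesis unfolding 1 2 3 4 5 by (rule ring_aux)
qed

lemma gamma_hk:
  fixes s :: real assumes s: "s > 0"
  shows "((\<lambda>a. exp (-a) * a powr (s-1)) has_integral Gamma s) {0<..}"
proof -
  have h0: "((\<lambda>t. t powr (s - 1) / exp t) has_integral Gamma s) {0..}"
    by (rule Gamma_integral_real[OF s])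
  hence "((\<lambda>t. if t \<in> {0<..} then t powr (s - 1) / exp t else 0) has_integral Gamma s) {0..}"
    by (rule has_integral_spike [of "{0}", rotated 2]) auto
  hence h1: "((\<lambda>t. t powr (s - 1) / exp t) has_integral Gamma s) {0<..}"
    by (subst (asm) has_integral_restrict) auto
  show ?thesis
    using h1 by (rule has_integral_eq[rotated]) (simp add: exp_minus field_simps)
qed

lemma gamma_set:
  fixes s :: real assumes s: "s > 0"
  shows "set_integrable lborel {0<..} (\<lambda>a. exp (-a) * a powr (s-1))"
proof -
  have "(\<lambda>a. exp (-a) * a powr (s-1)) absolutely_integrable_on {0<..}"
    using gamma_hk[OF s] by (intro nonnegative_absolutely_integrable_1) (auto simp: has_integral_integrable)
  hence "integrable lebesgue (\<lambda>x. indicator {0<..} x *\<^sub>R (exp (-x) * x powr (s-1)))"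
    by (simp add: set_integrable_def)
  moreover have "(\<lambda>x. indicator {0<..} x *\<^sub>R (exp (-x) * x powr (s-1))) \<in> borel_measurable lborel"
    by measurable
  ultimately show ?thesis
    unfolding set_integrable_def using integrable_completion by blast
qed

lemma core:
  fixes n k :: nat and c \<nu> :: real
  assumes n: "n \<ge> 1" and c: "c > 0" and nu: "\<nu> > 1"
  defines "g \<equiv> c * (\<nu> - 1)" and "L \<equiv> 1 / (1 + c)"
  defines "A \<equiv> g ^ k * (LBINT a:{0<..}. exp (-a) * a powr (\<nu> + real n / 2 - 1) * (a + g) powr (- real k - real n / 2)) / Gamma \<nu>"
  shows "0 \<le> A \<and> A \<le> 1 \<and>
    \<bar>A - L powr (real n / 2) * (1 - L) ^ k\<bar> \<le> (real n / sqrt L + real k) * (2 / sqrt \<nu> + \<bar>\<nu> / (\<nu> + g) - L\<bar>)"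
proof -
  have nu0: "\<nu> > 0" using nu by simp
  have g0: "g > 0" using c nu by (simp add: g_def)
  have L0: "L > 0" "L \<le> 1" using c by (auto simp: L_def)
  define S :: "real set" where "S = {0<..}"
  define f where "f = (\<lambda>a::real. exp (-a) * a powr (\<nu> + real n / 2 - 1) * (a + g) powr (- real k - real n / 2))"
  define w where "w = (\<lambda>a::real. exp (-a) * a powr (\<nu> - 1))"
  define H where "H = (\<lambda>a::real. (a / (a + g)) powr (real n / 2) * (1 - a / (a + g)) ^ k)"
  have pw': "g ^ k * f a = w a * H a" if "a > 0" for a
    unfolding f_def w_def H_def using pw[OF that g0] by simp
  have H01: "0 \<le> H a \<and> H a \<le> 1" if "a > 0" for a
  proof -
    define t where "t = a / (a + g)"
    have t: "0 < t" "t \<le> 1" using that g0 by (auto simp: t_def)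
    have "t powr (real n / 2) \<le> 1" using t by (intro powr_le1) auto
    moreover have "(1 - t) ^ k \<le> 1" using t by (intro power_le_one) auto
    ultimately show ?thesis unfolding H_def t_def[symmetric] using t
      by (auto intro!: mult_le_one)
  qed
  have w0: "w a \<ge> 0" for a unfolding w_def by simp
  have Gpos: "Gamma \<nu> > 0" using nu0 by simp
  have wint: "(w has_integral Gamma \<nu>) S" unfolding w_def S_def by (rule gamma_hk[OF nu0])
  have wset: "set_integrable lborel S w" unfolding w_def S_def by (rule gamma_set[OF nu0])
  have fmeas: "set_borel_measurable lborel S f"
    unfolding set_borel_measurable_def f_def S_def by measurable
  have gk0: "g ^ k > 0" using g0 by simp
  have fle: "norm (f a) \<le> norm (w a / g ^ k)" if "a \<in> S" for a
  proof -
    have a0: "a > 0" using that by (simp add: S_def)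
    have "f a \<ge> 0" unfolding f_def by simp
    moreover have "g ^ k * f a \<le> w a" using pw'[OF a0] H01[OF a0] w0[of a]
      by (simp add: mult_left_le)
    ultimately show ?thesis using gk0 w0[of a] by (simp add: pos_le_divide_eq mult.commute)
  qed
  have fset: "set_integrable lborel S f"
  proof (rule set_integrable_bound[OF _ fmeas])
    show "set_integrable lborel S (\<lambda>a. w a / g ^ k)" using wset by (rule set_integrable_divide)
    show "AE x in lborel. x \<in> S \<longrightarrow> norm (f x) \<le> norm (w x / g ^ k)"
      using fle by (intro AE_I2) auto
  qed
  define J where "J = (LBINT a:S. f a)"
  have fint: "(f has_integral J) S"
    using set_borel_integral_eq_integral[OF fset] unfolding J_def
    by (simp add: has_integral_integral)
  have Gint: "((\<lambda>a. g ^ k * f a) has_integral g ^ k * J) S"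
    using has_integral_mult_right[OF fint] by simp
  have AJ: "A = g ^ k * J / Gamma \<nu>" unfolding A_def J_def S_def f_def by simp
  have lo: "0 \<le> g ^ k * J"
    using has_integral_nonneg[OF Gint] g0 unfolding f_def by simp
  have hi: "g ^ k * J \<le> Gamma \<nu>"
    by (rule has_integral_le[OF Gint wint]) (use pw' H01 w0 in \<open>auto simp: S_def mult_left_le\<close>)
  define s where "s = 1 / sqrt \<nu>"
  define \<delta> where "\<delta> = \<bar>\<nu> / (\<nu> + g) - L\<bar>"
  define K where "K = real n / sqrt L + real k"
  define T where "T = L powr (real n / 2) * (1 - L) ^ k"
  have s0: "s > 0" using nu0 by (simp add: s_def)
  have K0: "K \<ge> 0" using L0 by (simp add: K_def)
  define w1 where "w1 = (\<lambda>a::real. exp (-a) * a powr \<nu>)"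
  define w2 where "w2 = (\<lambda>a::real. exp (-a) * a powr (\<nu> + 1))"
  have w1int: "(w1 has_integral Gamma (\<nu> + 1)) S"
    using gamma_hk[of "\<nu> + 1"] nu0 unfolding w1_def S_def by simp
  have w2int: "(w2 has_integral Gamma (\<nu> + 2)) S"
    using gamma_hk[of "\<nu> + 2"] nu0 unfolding w2_def S_def by (simp add: add.commute)
  have nZ: "\<nu> \<notin> \<int>\<^sub>\<le>\<^sub>0" "\<nu> + 1 \<notin> \<int>\<^sub>\<le>\<^sub>0" using nu0 by (auto dest: nonpos_Ints_nonpos)
  have G1: "Gamma (\<nu> + 1) = \<nu> * Gamma \<nu>" using Gamma_plus1[OF nZ(1)] .
  have G2: "Gamma (\<nu> + 2) = (\<nu> + 1) * \<nu> * Gamma \<nu>"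
  proof -
    have "\<nu> + 2 = (\<nu> + 1) + 1" by simp
    hence "Gamma (\<nu> + 2) = (\<nu> + 1) * Gamma (\<nu> + 1)" using Gamma_plus1[OF nZ(2)] by (simp add: add.commute)
    thus ?thesis using G1 by simp
  qed
  define U where "U = (\<lambda>a. K * (s * w a + (w2 a / \<nu>\<^sup>2 - 2 * w1 a / \<nu> + w a) / s + \<delta> * w a))"
  define IU where "IU = K * (s * Gamma \<nu> + (Gamma (\<nu> + 2) / \<nu>\<^sup>2 - 2 * Gamma (\<nu> + 1) / \<nu> + Gamma \<nu>) / s + \<delta> * Gamma \<nu>)"
  have Uint: "(U has_integral IU) S"
    unfolding U_def IU_def
    by (intro has_integral_mult_right has_integral_add has_integral_diff has_integral_divide
        wint w1int w2int)
  have IU_eq: "IU = K * Gamma \<nu> * (2 / sqrt \<nu> + \<delta>)"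
  proof -
    have e1: "(Gamma (\<nu> + 2) / \<nu>\<^sup>2 - 2 * Gamma (\<nu> + 1) / \<nu> + Gamma \<nu>) = Gamma \<nu> / \<nu>"
      using nu0 unfolding G1 G2 by (simp add: field_simps power2_eq_square)
    have e2: "Gamma \<nu> / \<nu> / s = Gamma \<nu> / sqrt \<nu>"
    proof -
      have sq: "sqrt \<nu> * sqrt \<nu> = \<nu>" using nu0 by simp
      have sp: "sqrt \<nu> > 0" using nu0 by simp
      have "Gamma \<nu> / \<nu> / s = Gamma \<nu> * sqrt \<nu> / (sqrt \<nu> * sqrt \<nu>)"
        using nu0 by (simp add: s_def sq)
      also have "\<dots> = Gamma \<nu> / sqrt \<nu>" using sp nu0 by (simp add: field_simps)
      finally show ?thesis .
    qed
    have e3: "s * Gamma \<nu> = Gamma \<nu> / sqrt \<nu>" by (simp add: s_def)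
    show ?thesis unfolding IU_def e1 e2 e3 by (simp add: algebra_simps)
  qed
  have pt: "\<bar>g ^ k * f a - T * w a\<bar> \<le> U a" if "a \<in> S" for a
  proof -
    have a0: "a > 0" using that by (simp add: S_def)
    define t where "t = a / (a + g)"
    have t: "0 < t" "t \<le> 1" using a0 g0 by (auto simp: t_def)
    have "\<bar>g ^ k * f a - T * w a\<bar> = w a * \<bar>H a - T\<bar>"
    proof -
      have "g ^ k * f a - T * w a = w a * (H a - T)" using pw'[OF a0] by (simp add: algebra_simps)
      thus ?thesis using w0[of a] by (simp add: abs_mult)
    qed
    also have "\<bar>H a - T\<bar> \<le> K * \<bar>t - L\<bar>"
      unfolding H_def T_def K_def t_def[symmetric] using H_lip[OF t L0(1) L0(2)] by simp
    also have "\<bar>t - L\<bar> \<le> \<bar>a / \<nu> - 1\<bar> + \<delta>"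
    proof -
      have "\<bar>t - L\<bar> \<le> \<bar>t - \<nu> / (\<nu> + g)\<bar> + \<bar>\<nu> / (\<nu> + g) - L\<bar>" by linarith
      thus ?thesis using t_close[OF a0 g0 nu0] unfolding t_def \<delta>_def by linarith
    qed
    also have "\<bar>a / \<nu> - 1\<bar> \<le> s + (a / \<nu> - 1)\<^sup>2 / s" by (rule abs_le_quad[OF s0])
    finally have "\<bar>g ^ k * f a - T * w a\<bar> \<le> w a * (K * (s + (a / \<nu> - 1)\<^sup>2 / s + \<delta>))"
      using w0[of a] K0 by (simp add: mult_left_mono)
    also have "\<dots> = U a"
    proof -
      have "w a * (a / \<nu> - 1)\<^sup>2 = w2 a / \<nu>\<^sup>2 - 2 * w1 a / \<nu> + w a"
      proof -
        have p1: "a powr \<nu> = a powr (\<nu> - 1) * a"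
        proof -
          have "a powr \<nu> = a powr ((\<nu> - 1) + 1)" by simp
          also have "\<dots> = a powr (\<nu> - 1) * a powr 1" by (rule powr_add)
          finally show ?thesis using a0 by simp
        qed
        have p2: "a powr (\<nu> + 1) = a powr (\<nu> - 1) * a\<^sup>2"
        proof -
          have "a powr (\<nu> + 1) = a powr \<nu> * a powr 1"
            by (rule powr_add)
          also have "\<dots> = a powr \<nu> * a" using a0 by simp
          finally show ?thesis using p1 by (simp add: power2_eq_square)
        qed
        note p1 p2
        thus ?thesis unfolding w_def w1_def w2_def using nu0
          by (simp add: field_simps power2_eq_square)
      qed
      hence e: "w a * (a / \<nu> - 1)\<^sup>2 / s = (w2 a / \<nu>\<^sup>2 - 2 * w1 a / \<nu> + w a) / s" by simp
      have "w a * (K * (s + (a / \<nu> - 1)\<^sup>2 / s + \<delta>)) = K * (s * w a + w a * (a / \<nu> - 1)\<^sup>2 / s + \<delta> * w a)"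
        by (simp add: algebra_simps)
      thus ?thesis unfolding U_def e .
    qed
    finally show ?thesis .
  qed
  have Tw: "((\<lambda>a. g ^ k * f a - T * w a) has_integral (g ^ k * J - T * Gamma \<nu>)) S"
    by (intro has_integral_diff Gint has_integral_mult_right wint)
  have up: "g ^ k * J - T * Gamma \<nu> \<le> IU"
    by (rule has_integral_le[OF Tw Uint]) (use pt in \<open>auto simp: abs_le_iff\<close>)
  have dn: "- IU \<le> g ^ k * J - T * Gamma \<nu>"
    by (rule has_integral_le[OF has_integral_neg[OF Uint] Tw]) (use pt in \<open>fastforce simp: abs_le_iff\<close>)
  have "\<bar>g ^ k * J - T * Gamma \<nu>\<bar> \<le> K * Gamma \<nu> * (2 / sqrt \<nu> + \<delta>)"
    using up dn IU_eq by linarith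
  hence X: "\<bar>g ^ k * J - T * Gamma \<nu>\<bar> / Gamma \<nu> \<le> K * Gamma \<nu> * (2 / sqrt \<nu> + \<delta>) / Gamma \<nu>"
    using Gpos by (intro divide_right_mono) auto
  have eqA: "A - T = (g ^ k * J - T * Gamma \<nu>) / Gamma \<nu>"
    using Gpos unfolding AJ by (simp add: diff_divide_distrib)
  have "\<bar>A - T\<bar> \<le> K * (2 / sqrt \<nu> + \<delta>)"
  proof -
    have "\<bar>A - T\<bar> = \<bar>g ^ k * J - T * Gamma \<nu>\<bar> / Gamma \<nu>"
      unfolding eqA using Gpos by (simp add: abs_divide)
    moreover have "K * Gamma \<nu> * (2 / sqrt \<nu> + \<delta>) / Gamma \<nu> = K * (2 / sqrt \<nu> + \<delta>)"
      using Gpos by simp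
    ultimately show ?thesis using X by simp
  qed
  moreover have "0 \<le> A" "A \<le> 1" using lo hi Gpos unfolding AJ by auto
  ultimately show ?thesis unfolding T_def K_def \<delta>_def by simp
qed

lemma alpha_eq:
  fixes \<sigma> \<eta> \<nu> :: real and n k :: nat
  assumes "\<sigma> > 0" "\<nu> > 1"
  shows "alpha_coef (real n) \<nu> (\<eta> * sqrt (\<nu> - 1) / \<sigma>) k =
     Gamma (real k + real n / 2) / (fact k * Gamma (real n / 2)) *
     ((\<eta>\<^sup>2 / \<sigma>\<^sup>2 * (\<nu> - 1)) ^ k * (LBINT a:{0<..}. exp (-a) * a powr (\<nu> + real n / 2 - 1)
        * (a + \<eta>\<^sup>2 / \<sigma>\<^sup>2 * (\<nu> - 1)) powr (- real k - real n / 2)) / Gamma \<nu>)"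
proof -
  have sq: "(\<eta> * sqrt (\<nu> - 1) / \<sigma>)\<^sup>2 = \<eta>\<^sup>2 / \<sigma>\<^sup>2 * (\<nu> - 1)"
    using assms by (simp add: power_divide power_mult_distrib)
  have pw2: "(\<eta> * sqrt (\<nu> - 1) / \<sigma>) ^ (2 * k) = (\<eta>\<^sup>2 / \<sigma>\<^sup>2 * (\<nu> - 1)) ^ k"
    by (simp add: power_mult sq)
  show ?thesis unfolding alpha_coef_def sq pw2 by simp
qed

lemma lim_aux:
  fixes c :: real assumes c: "c > 0"
  shows "((\<lambda>\<nu>. 2 / sqrt \<nu> + \<bar>\<nu> / (\<nu> + c * (\<nu> - 1)) - 1 / (1 + c)\<bar>) \<longlongrightarrow> 0) at_top"
proof -
  have inv: "((\<lambda>x::real. 1 / x) \<longlongrightarrow> 0) at_top"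
    using tendsto_inverse_0_at_top[OF filterlim_ident] by (simp add: inverse_eq_divide)
  have l1: "((\<lambda>x. 1 / (1 + c * (1 - 1 / x))) \<longlongrightarrow> 1 / (1 + c * (1 - 0))) at_top"
    by (intro tendsto_intros inv) (use c in auto)
  have l2: "((\<lambda>x. x / (x + c * (x - 1))) \<longlongrightarrow> 1 / (1 + c)) at_top"
  proof (rule Lim_transform_eventually[OF l1[simplified]])
    show "\<forall>\<^sub>F x in at_top. 1 / (1 + c * (1 - 1 / x)) = x / (x + c * (x - 1))"
      using eventually_gt_at_top[of 0] by eventually_elim (simp add: field_simps)
  qed
  have l3: "((\<lambda>x. \<bar>x / (x + c * (x - 1)) - 1 / (1 + c)\<bar>) \<longlongrightarrow> 0) at_top"
    using tendsto_rabs[OF LIM_zero[OF l2]] by simp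
  have l4: "((\<lambda>x::real. 2 / sqrt x) \<longlongrightarrow> 0) at_top"
    by (rule tendsto_divide_0[OF tendsto_const]) (rule filterlim_mono[OF sqrt_at_top at_top_le_at_infinity order_refl])
  show ?thesis using tendsto_add[OF l4 l3] by simp
qed

lemma T_eq:
  fixes c D :: real assumes "c > 0"
  shows "(1 / (1 + c)) powr D * (1 - 1 / (1 + c)) ^ k = c ^ k * (1 + c) powr (- real k - D)"
proof -
  have a: "1 - 1 / (1 + c) = c / (1 + c)" using assms by (simp add: field_simps)
  have b: "(1 + c) powr (- real k - D) = (1 + c) powr (- D) / (1 + c) ^ k"
  proof -
    have "- real k - D = - D - real k" by simp
    hence "(1 + c) powr (- real k - D) = (1 + c) powr (- D) / (1 + c) powr real k"
      by (simp only: powr_diff)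
    also have "(1 + c) powr real k = (1 + c) ^ k" using assms by (intro powr_realpow) auto
    finally show ?thesis .
  qed
  have d: "(1 / (1 + c)) powr D = (1 + c) powr (- D)"
  proof -
    have "(1 / (1 + c)) powr D = 1 powr D / (1 + c) powr D" by (rule powr_divide; use assms in auto)
    thus ?thesis by (simp add: powr_minus divide_inverse)
  qed
  show ?thesis unfolding a b d by (simp add: power_divide)
qed

lemma frac_aux1:
  fixes S E :: real assumes "S > 0" "E \<ge> 0"
  shows "1 / (1 + E / S) = S / (S + E)" "1 / (1 + E / S) / (2 * pi * S) = 1 / (2 * pi * (S + E))"
    "- (y / (2 * S)) + (1 - 1 / (1 + E / S)) * (y / (2 * S)) = - y / (2 * (S + E))"
proof -
  have SE: "S + E > 0" using assms by simp
  show h: "1 / (1 + E / S) = S / (S + E)"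
    using assms SE by (simp add: field_simps)
  have "S / (S + E) / (2 * pi * S) = S / (S * (2 * pi * (S + E)))"
    by (simp add: mult_ac)
  also have "\<dots> = 1 / (2 * pi * (S + E))" using assms by simp
  finally show "1 / (1 + E / S) / (2 * pi * S) = 1 / (2 * pi * (S + E))"
    unfolding h .
  have a1: "E / (S + E) - 1 = - (S / (S + E))" using SE by (simp add: field_simps)
  have a2: "1 - S / (S + E) = E / (S + E)" using SE by (simp add: field_simps)
  have a3: "y / (2 * S) * (S / (S + E)) = y / (2 * (S + E))"
  proof -
    have "y / (2 * S) * (S / (S + E)) = (y * S) / ((2 * (S + E)) * S)" by (simp add: mult_ac)
    also have "\<dots> = y / (2 * (S + E))" using assms by simp
    finally show ?thesis .
  qed
  have gen: "\<And>p q :: real. - p + q * p = p * (q - 1)" by (simp add: algebra_simps)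
  have "- (y / (2 * S)) + (E / (S + E)) * (y / (2 * S)) = y / (2 * S) * (E / (S + E) - 1)"
    by (rule gen)
  also have "\<dots> = - (y / (2 * S) * (S / (S + E)))" unfolding a1 by simp
  also have "\<dots> = - y / (2 * (S + E))" unfolding a3 by simp
  finally show "- (y / (2 * S)) + (1 - 1 / (1 + E / S)) * (y / (2 * S)) = - y / (2 * (S + E))"
    unfolding h a2 .
qed

lemma const_eq:
  fixes \<sigma> \<eta> :: real assumes s: "\<sigma> > 0"
  shows "(1 / (1 + \<eta>\<^sup>2 / \<sigma>\<^sup>2)) powr (real n / 2) / (\<sigma> * sqrt (2 * pi)) ^ n
       = (2 * pi * (\<sigma>\<^sup>2 + \<eta>\<^sup>2)) powr (- real n / 2)"
proof -
  have p: "2 * pi * \<sigma>\<^sup>2 > 0" using s by simp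
  have "(\<sigma> * sqrt (2 * pi)) ^ n = sqrt (2 * pi * \<sigma>\<^sup>2) ^ n"
    using s by (simp add: real_sqrt_mult mult.commute)
  also have "\<dots> = (2 * pi * \<sigma>\<^sup>2) powr (real n / 2)" using powr_half_nat[OF p] by simp
  finally have e1: "(\<sigma> * sqrt (2 * pi)) ^ n = (2 * pi * \<sigma>\<^sup>2) powr (real n / 2)" .
  have q: "1 / (1 + \<eta>\<^sup>2 / \<sigma>\<^sup>2) / (2 * pi * \<sigma>\<^sup>2) = 1 / (2 * pi * (\<sigma>\<^sup>2 + \<eta>\<^sup>2))"
    using frac_aux1(2)[of "\<sigma>\<^sup>2" "\<eta>\<^sup>2"] s by simp
  have pos: "1 / (1 + \<eta>\<^sup>2 / \<sigma>\<^sup>2) \<ge> 0" by (simp add: add_nonneg_pos)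
  have "(1 / (1 + \<eta>\<^sup>2 / \<sigma>\<^sup>2)) powr (real n / 2) / (2 * pi * \<sigma>\<^sup>2) powr (real n / 2)
      = (1 / (2 * pi * (\<sigma>\<^sup>2 + \<eta>\<^sup>2))) powr (real n / 2)"
    unfolding powr_divide[of "1 / (1 + \<eta>\<^sup>2 / \<sigma>\<^sup>2)" "2 * pi * \<sigma>\<^sup>2" "real n / 2", symmetric] q ..
  also have "\<dots> = (2 * pi * (\<sigma>\<^sup>2 + \<eta>\<^sup>2)) powr (- real n / 2)"
  proof -
    have m: "- real n / 2 = - (real n / 2)" by simp
    show ?thesis unfolding m powr_minus powr_divide by (simp add: inverse_eq_divide)
  qed
  finally show ?thesis unfolding e1 .
qed

lemma exp_arg_eq:
  fixes \<sigma> \<eta> y :: real assumes s: "\<sigma> > 0"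
  shows "- (y / (2 * \<sigma>\<^sup>2)) + (1 - 1 / (1 + \<eta>\<^sup>2 / \<sigma>\<^sup>2)) * (y / (2 * \<sigma>\<^sup>2))
       = - y / (2 * (\<sigma>\<^sup>2 + \<eta>\<^sup>2))"
proof -
  show ?thesis using frac_aux1(3)[of "\<sigma>\<^sup>2" "\<eta>\<^sup>2" y] s by simp
qed

lemma ring_aux2: "((E::real) / D) * Q * F = (Q / D) * (E * F)"
  by (simp add: divide_inverse mult_ac)

theorem theorem10:
  fixes \<sigma> \<eta> :: real
  assumes "\<sigma> > 0" and "\<eta> > 0"
  shows "(\<forall>k::nat.
           ((\<lambda>\<nu>. alpha_coef (real DIM('a::euclidean_space)) \<nu> (\<eta> * sqrt (\<nu> - 1) / \<sigma>) k
                 / (Gamma (real k + real DIM('a) / 2) / (fact k * Gamma (real DIM('a) / 2))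
                    * (\<eta>\<^sup>2 / \<sigma>\<^sup>2) ^ k
                    * (1 + \<eta>\<^sup>2 / \<sigma>\<^sup>2) powr (- real k - real DIM('a) / 2)))
            \<longlongrightarrow> 1) at_top)
       \<and> (\<forall>z::'a.
           ((\<lambda>\<nu>. \<Sum>k. alpha_coef (real DIM('a)) \<nu> (\<eta> * sqrt (\<nu> - 1) / \<sigma>) k * g_fun k \<sigma> z)
            \<longlongrightarrow> (2 * pi * (\<sigma>\<^sup>2 + \<eta>\<^sup>2)) powr (- real DIM('a) / 2)
                 * exp (- (norm z)\<^sup>2 / (2 * (\<sigma>\<^sup>2 + \<eta>\<^sup>2)))) at_top)"
proof -
  note s0 = assms(1) and e0 = assms(2)
  define n where "n = DIM('a)"
  define c where "c = \<eta>\<^sup>2 / \<sigma>\<^sup>2"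
  have c0: "c > 0" using s0 e0 by (simp add: c_def)
  define L where "L = 1 / (1 + c)"
  have n1: "n \<ge> 1" using DIM_positive[where 'a='a] by (simp add: n_def)
  define Ck where "Ck = (\<lambda>k::nat. Gamma (real k + real n / 2) / (fact k * Gamma (real n / 2)))"
  define T where "T = (\<lambda>k::nat. L powr (real n / 2) * (1 - L) ^ k)"
  define al where "al = (\<lambda>k \<nu>. alpha_coef (real n) \<nu> (\<eta> * sqrt (\<nu> - 1) / \<sigma>) k)"
  have Ck0: "Ck k > 0" for k
    using n1 by (auto simp: Ck_def intro!: divide_pos_pos mult_pos_pos add_nonneg_pos)
  have key: "0 \<le> al k \<nu> \<and> al k \<nu> \<le> Ck k \<and>
      \<bar>al k \<nu> / Ck k - T k\<bar> \<le> (real n / sqrt L + real k) * (2 / sqrt \<nu> + \<bar>\<nu> / (\<nu> + c * (\<nu> - 1)) - L\<bar>)"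
    if nu: "\<nu> > 1" for k \<nu>
  proof -
    define A where "A = (c * (\<nu> - 1)) ^ k * (LBINT a:{0<..}. exp (-a) * a powr (\<nu> + real n / 2 - 1)
        * (a + c * (\<nu> - 1)) powr (- real k - real n / 2)) / Gamma \<nu>"
    have aA: "al k \<nu> = Ck k * A"
      unfolding al_def Ck_def A_def c_def using alpha_eq[OF s0 nu, where \<eta>=\<eta> and n=n and k=k] by simp
    have cr: "0 \<le> A \<and> A \<le> 1 \<and> \<bar>A - T k\<bar> \<le> (real n / sqrt L + real k) * (2 / sqrt \<nu> + \<bar>\<nu> / (\<nu> + c * (\<nu> - 1)) - L\<bar>)"
      using core[OF n1 c0 nu, of k] unfolding A_def T_def L_def by simp
    show ?thesis using cr Ck0[of k] unfolding aA
      by (auto simp: mult_le_cancel_left1)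
  qed
  have lim1: "((\<lambda>\<nu>. al k \<nu>) \<longlongrightarrow> Ck k * T k) at_top" for k
  proof -
    have "((\<lambda>\<nu>. (real n / sqrt L + real k) * (2 / sqrt \<nu> + \<bar>\<nu> / (\<nu> + c * (\<nu> - 1)) - L\<bar>)) \<longlongrightarrow> 0) at_top"
      using tendsto_mult_right_zero[OF lim_aux[OF c0]] unfolding L_def by simp
    hence "((\<lambda>\<nu>. al k \<nu> / Ck k - T k) \<longlongrightarrow> 0) at_top"
      by (rule Lim_null_comparison[rotated])
         (use eventually_gt_at_top[of 1] in \<open>eventually_elim, use key in auto\<close>)
    hence "((\<lambda>\<nu>. al k \<nu> / Ck k) \<longlongrightarrow> T k) at_top" by (rule LIM_zero_cancel)
    hence "((\<lambda>\<nu>. Ck k * (al k \<nu> / Ck k)) \<longlongrightarrow> Ck k * T k) at_top" by (rule tendsto_mult_left)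
    thus ?thesis using Ck0[of k] by simp
  qed
  have part1: "\<forall>k::nat.
           ((\<lambda>\<nu>. alpha_coef (real DIM('a::euclidean_space)) \<nu> (\<eta> * sqrt (\<nu> - 1) / \<sigma>) k
                 / (Gamma (real k + real DIM('a) / 2) / (fact k * Gamma (real DIM('a) / 2))
                    * (\<eta>\<^sup>2 / \<sigma>\<^sup>2) ^ k
                    * (1 + \<eta>\<^sup>2 / \<sigma>\<^sup>2) powr (- real k - real DIM('a) / 2)))
            \<longlongrightarrow> 1) at_top"
  proof
    fix k :: nat
    have den: "Gamma (real k + real DIM('a) / 2) / (fact k * Gamma (real DIM('a) / 2))
                    * (\<eta>\<^sup>2 / \<sigma>\<^sup>2) ^ k
                    * (1 + \<eta>\<^sup>2 / \<sigma>\<^sup>2) powr (- real k - real DIM('a) / 2) = Ck k * T k"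
      unfolding Ck_def T_def L_def n_def c_def[symmetric] using T_eq[OF c0, of "real DIM('a) / 2" k]
      by simp
    have T0: "T k > 0" using c0 by (simp add: T_def L_def)
    have "((\<lambda>\<nu>. al k \<nu> / (Ck k * T k)) \<longlongrightarrow> (Ck k * T k) / (Ck k * T k)) at_top"
      by (rule tendsto_divide[OF lim1 tendsto_const]) (use Ck0[of k] T0 in simp)
    hence "((\<lambda>\<nu>. al k \<nu> / (Ck k * T k)) \<longlongrightarrow> 1) at_top" using Ck0[of k] T0 by simp
    thus "((\<lambda>\<nu>. alpha_coef (real DIM('a::euclidean_space)) \<nu> (\<eta> * sqrt (\<nu> - 1) / \<sigma>) k
                 / (Gamma (real k + real DIM('a) / 2) / (fact k * Gamma (real DIM('a) / 2))
                    * (\<eta>\<^sup>2 / \<sigma>\<^sup>2) ^ k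
                    * (1 + \<eta>\<^sup>2 / \<sigma>\<^sup>2) powr (- real k - real DIM('a) / 2)))
            \<longlongrightarrow> 1) at_top"
      unfolding den unfolding al_def n_def .
  qed
  have part2: "\<forall>z::'a.
           ((\<lambda>\<nu>. \<Sum>k. alpha_coef (real DIM('a)) \<nu> (\<eta> * sqrt (\<nu> - 1) / \<sigma>) k * g_fun k \<sigma> z)
            \<longlongrightarrow> (2 * pi * (\<sigma>\<^sup>2 + \<eta>\<^sup>2)) powr (- real DIM('a) / 2)
                 * exp (- (norm z)\<^sup>2 / (2 * (\<sigma>\<^sup>2 + \<eta>\<^sup>2)))) at_top"
  proof
    fix z :: 'a
    define x where "x = (norm z)\<^sup>2 / (2 * \<sigma>\<^sup>2)"
    define P where "P = exp (- x) / (\<sigma> * sqrt (2 * pi)) ^ n"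
    have x0: "x \<ge> 0" unfolding x_def by simp
    have ex: "exp (- (norm z)\<^sup>2 / (2 * \<sigma>\<^sup>2)) = exp (- x)" unfolding x_def by simp
    have Gd: "Gamma (real n / 2) > 0" using n1 by simp
    have Gk: "Gamma (real k + real n / 2) > 0" for k using n1 by (simp add: add_nonneg_pos)
    have gdef: "g_fun k \<sigma> z = Gamma (real n / 2) / (Gamma (real k + real n / 2) * (\<sigma> * sqrt (2 * pi)) ^ n)
                * x ^ k * exp (- x)" for k
      unfolding g_fun_def n_def[symmetric] x_def[symmetric] ex by (simp add: x_def)
    have gf0: "g_fun k \<sigma> z \<ge> 0" for k
      unfolding gdef using Gd Gk[of k] s0 x0 by simp
    have gf: "Ck k * g_fun k \<sigma> z = P * (x ^ k / fact k)" for k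
    proof -
      have "Ck k * g_fun k \<sigma> z = (Gamma (real k + real n / 2) / Gamma (real k + real n / 2))
           * (Gamma (real n / 2) / Gamma (real n / 2)) * (exp (- x) / (\<sigma> * sqrt (2 * pi)) ^ n) * (x ^ k / fact k)"
        unfolding gdef Ck_def by (simp add: field_simps)
      thus ?thesis using Gd Gk[of k] unfolding P_def by simp
    qed
    have es: "(\<lambda>k. y ^ k / fact k) sums exp y" for y :: real
      using exp_converges[of y] by (simp add: divide_inverse mult.commute)
    have Msum: "summable (\<lambda>k. Ck k * g_fun k \<sigma> z)"
      unfolding gf using sums_mult[OF es[of x], of P] by (simp add: sums_iff)
    have bsum: "(\<lambda>k. Ck k * T k * g_fun k \<sigma> z) sums (P * L powr (real n / 2) * exp ((1 - L) * x))"
    proof -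
      have "(\<lambda>k. Ck k * T k * g_fun k \<sigma> z) = (\<lambda>k. P * L powr (real n / 2) * (((1 - L) * x) ^ k / fact k))"
      proof
        fix k
        have "Ck k * T k * g_fun k \<sigma> z = T k * (Ck k * g_fun k \<sigma> z)" by simp
        also have "\<dots> = P * L powr (real n / 2) * (((1 - L) * x) ^ k / fact k)"
          unfolding gf T_def by (simp add: power_mult_distrib)
        finally show "Ck k * T k * g_fun k \<sigma> z = P * L powr (real n / 2) * (((1 - L) * x) ^ k / fact k)" .
      qed
      thus ?thesis using sums_mult[OF es[of "(1 - L) * x"], of "P * L powr (real n / 2)"] by simp
    qed
    have tan: "((\<lambda>\<nu>. \<Sum>k. al k \<nu> * g_fun k \<sigma> z) \<longlongrightarrow> (\<Sum>k. Ck k * T k * g_fun k \<sigma> z)) at_top"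
    proof -
      have lim: "((\<lambda>\<nu>. al k \<nu> * g_fun k \<sigma> z) \<longlongrightarrow> Ck k * T k * g_fun k \<sigma> z) at_top" for k
        by (rule tendsto_mult_right[OF lim1])
      have bnd: "eventually (\<lambda>(k, \<nu>). norm (al k \<nu> * g_fun k \<sigma> z) \<le> Ck k * g_fun k \<sigma> z) (at_top \<times>\<^sub>F at_top)"
        unfolding eventually_prod_filter
      proof (intro exI conjI allI impI)
        show "eventually (\<lambda>_::nat. True) at_top" by simp
        show "eventually (\<lambda>\<nu>::real. \<nu> > 1) at_top" by (rule eventually_gt_at_top)
        fix k :: nat and \<nu> :: real assume "True" "\<nu> > 1"
        hence "0 \<le> al k \<nu>" "al k \<nu> \<le> Ck k" using key by auto
        thus "case (k, \<nu>) of (k, \<nu>) \<Rightarrow> norm (al k \<nu> * g_fun k \<sigma> z) \<le> Ck k * g_fun k \<sigma> z"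
          using gf0[of k] by (simp add: abs_mult mult_right_mono)
      qed
      show ?thesis using tannerys_theorem[OF lim bnd Msum] by simp
    qed
    have val: "P * L powr (real n / 2) * exp ((1 - L) * x)
        = (2 * pi * (\<sigma>\<^sup>2 + \<eta>\<^sup>2)) powr (- real n / 2) * exp (- (norm z)\<^sup>2 / (2 * (\<sigma>\<^sup>2 + \<eta>\<^sup>2)))"
    proof -
      have "P * L powr (real n / 2) * exp ((1 - L) * x)
          = (L powr (real n / 2) / (\<sigma> * sqrt (2 * pi)) ^ n) * (exp (- x) * exp ((1 - L) * x))"
        unfolding P_def by (rule ring_aux2)
      also have "exp (- x) * exp ((1 - L) * x) = exp (- x + (1 - L) * x)" by (rule exp_add[symmetric])
      also have "L powr (real n / 2) / (\<sigma> * sqrt (2 * pi)) ^ n = (2 * pi * (\<sigma>\<^sup>2 + \<eta>\<^sup>2)) powr (- real n / 2)"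
        unfolding L_def c_def by (rule const_eq[OF s0])
      also have "- x + (1 - L) * x = - (norm z)\<^sup>2 / (2 * (\<sigma>\<^sup>2 + \<eta>\<^sup>2))"
        unfolding x_def L_def c_def by (rule exp_arg_eq[OF s0])
      finally show ?thesis .
    qed
    show "((\<lambda>\<nu>. \<Sum>k. alpha_coef (real DIM('a)) \<nu> (\<eta> * sqrt (\<nu> - 1) / \<sigma>) k * g_fun k \<sigma> z)
            \<longlongrightarrow> (2 * pi * (\<sigma>\<^sup>2 + \<eta>\<^sup>2)) powr (- real DIM('a) / 2)
                 * exp (- (norm z)\<^sup>2 / (2 * (\<sigma>\<^sup>2 + \<eta>\<^sup>2)))) at_top"
    proof -
      have "((\<lambda>\<nu>. \<Sum>k. al k \<nu> * g_fun k \<sigma> z) \<longlongrightarrow> (2 * pi * (\<sigma>\<^sup>2 + \<eta>\<^sup>2)) powr (- real n / 2)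
                 * exp (- (norm z)\<^sup>2 / (2 * (\<sigma>\<^sup>2 + \<eta>\<^sup>2)))) at_top"
        using tan unfolding sums_unique[OF bsum, symmetric] val .
      thus ?thesis unfolding al_def n_def .
    qed
  qed
  show ?thesis using part1 part2 by blast
qed

end
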